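(* If $A$ is an approximately unital Banach algebra, then the norm closure of $\mathbb{R}^+{\mathfrak F}_A=\{ta:t\ge0,\ a\in{\mathfrak F}_A\}$ equals ${\mathfrak r}_A$.
   Context: Banach algebras are complex with submultiplicative norm; "unital" means identity of norm 1; approximately unital means having a contractive approximate identity. Multiplier unitization $A^1$: $A$ if unital, otherwise $A+\mathbb{C}1$ with $\|a+\lambda1\|=\sup\{\|ac+\lambda c\|:c\in A,\|c\|\le1\}$. ${\mathfrak F}_A=\{a\in A:\|1-a\|_{A^1}\le1\}$; ${\mathfrak r}_A=\{a\in A:\mathrm{Re}\,\varphi(a)\ge0$ for all $\varphi\in(A^1)^*$ with $\|\varphi\|=\varphi(1)=1\}$. *)

theory Defs
  imports "HOL-Analysis.Analysis"
begin

text \<open>A complex Banach algebra is modelled as a type of class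
  real_normed_algebra + banach (associative, submultiplicative norm, complete,
  not necessarily unital or commutative) together with an operator J
  ("multiplication by i") turning it into a complex algebra.\<close>

definition cscale :: "('a::real_vector \<Rightarrow> 'a) \<Rightarrow> complex \<Rightarrow> 'a \<Rightarrow> 'a" where
  "cscale J c x = Re c *\<^sub>R x + Im c *\<^sub>R J x"

definition complex_banach_algebra :: "('a::{real_normed_algebra,banach} \<Rightarrow> 'a) \<Rightarrow> bool" where
  "complex_banach_algebra J \<longleftrightarrow>
     (\<forall>x y. J (x + y) = J x + J y) \<and>
     (\<forall>r x. J (r *\<^sub>R x) = r *\<^sub>R J x) \<and>
     (\<forall>x. J (J x) = - x) \<and>
     (\<forall>x y. J (x * y) = J x * y \<and> J (x * y) = x * J y) \<and>
     (\<forall>c x. norm (cscale J c x) = cmod c * norm x)"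

definition is_unit_id :: "'a::real_normed_algebra \<Rightarrow> bool" where
  "is_unit_id e \<longleftrightarrow> (\<forall>x. e * x = x \<and> x * e = x) \<and> norm e = 1"

definition unital :: "'a::real_normed_algebra itself \<Rightarrow> bool" where
  "unital _ \<longleftrightarrow> (\<exists>e::'a. is_unit_id e)"

definition unit_id :: "'a::real_normed_algebra" where
  "unit_id = (SOME e. is_unit_id e)"

text \<open>Approximately unital: there is a contractive approximate identity, i.e. a
  net (encoded as a proper filter on A) of elements of norm at most 1 with
  e_t a \<rightarrow> a and a e_t \<rightarrow> a for all a.\<close>
definition approx_unital :: "'a::real_normed_algebra itself \<Rightarrow> bool" where
  "approx_unital _ \<longleftrightarrow> (\<exists>F::'a filter. F \<noteq> bot \<and> F \<le> principal {x. norm x \<le> 1} \<and>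
       (\<forall>a. ((\<lambda>x. x * a) \<longlongrightarrow> a) F \<and> ((\<lambda>x. a * x) \<longlongrightarrow> a) F))"

text \<open>Norm in the multiplier unitization A^1 of the element a + \<lambda>1.
  If A is unital, A^1 = A and a + \<lambda>1 is a + \<lambda>e; otherwise the multiplier norm.\<close>
definition A1norm :: "('a::{real_normed_algebra,banach} \<Rightarrow> 'a) \<Rightarrow> 'a \<Rightarrow> complex \<Rightarrow> real" where
  "A1norm J a l =
     (if unital TYPE('a) then norm (a + cscale J l unit_id)
      else Sup {norm (a * c + cscale J l c) | c. norm c \<le> 1})"

text \<open>States of A^1 (complex linear functionals \<phi> with \<parallel>\<phi>\<parallel> = \<phi>(1) = 1).
  Unital case: functionals on A.\<close>
definition states_unital :: "('a::{real_normed_algebra,banach} \<Rightarrow> 'a) \<Rightarrow> ('a \<Rightarrow> complex) set" where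
  "states_unital J = {\<phi>.
     (\<forall>x y. \<phi> (x + y) = \<phi> x + \<phi> y) \<and> (\<forall>c x. \<phi> (cscale J c x) = c * \<phi> x) \<and>
     (\<exists>K. \<forall>x. cmod (\<phi> x) \<le> K * norm x) \<and>
     Sup {cmod (\<phi> x) | x. norm x \<le> 1} = 1 \<and> \<phi> unit_id = 1}"

text \<open>Non-unital case: A^1 = A \<oplus> \<complex>, element (a, l) standing for a + \<lambda>1.\<close>
definition states_nonunital :: "('a::{real_normed_algebra,banach} \<Rightarrow> 'a) \<Rightarrow> ('a \<Rightarrow> complex \<Rightarrow> complex) set" where
  "states_nonunital J = {\<psi>.
     (\<forall>a b l m. \<psi> (a + b) (l + m) = \<psi> a l + \<psi> b m) \<and>
     (\<forall>c a l. \<psi> (cscale J c a) (c * l) = c * \<psi> a l) \<and>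
     (\<exists>K. \<forall>a l. cmod (\<psi> a l) \<le> K * A1norm J a l) \<and>
     Sup {cmod (\<psi> a l) | a l. A1norm J a l \<le> 1} = 1 \<and> \<psi> 0 1 = 1}"

definition frakF :: "('a::{real_normed_algebra,banach} \<Rightarrow> 'a) \<Rightarrow> 'a set" where
  "frakF J = {a. A1norm J (- a) 1 \<le> 1}"

definition frakr :: "('a::{real_normed_algebra,banach} \<Rightarrow> 'a) \<Rightarrow> 'a set" where
  "frakr J = (if unital TYPE('a)
     then {a. \<forall>\<phi>\<in>states_unital J. Re (\<phi> a) \<ge> 0}
     else {a. \<forall>\<psi>\<in>states_nonunital J. Re (\<psi> a 0) \<ge> 0})"

end

theory Submission
  imports Defs
begin


definition gd :: "('a::real_normed_vector \<times> real) set \<Rightarrow> bool" where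
  "gd H \<longleftrightarrow> (0,0) \<in> H \<and> (\<forall>x u y v. (x,u)\<in>H \<longrightarrow> (y,v)\<in>H \<longrightarrow> (x+y,u+v)\<in>H)
     \<and> (\<forall>r x u. (x,u)\<in>H \<longrightarrow> (r *\<^sub>R x, r*u)\<in>H) \<and> (\<forall>x u. (x,u)\<in>H \<longrightarrow> u \<le> norm x)"

lemma gdD:
  assumes "gd H"
  shows gd0: "(0,0)\<in>H"
    and gd_add: "\<And>x u y v. (x,u)\<in>H \<Longrightarrow> (y,v)\<in>H \<Longrightarrow> (x+y,u+v)\<in>H"
    and gd_sc: "\<And>r x u. (x,u)\<in>H \<Longrightarrow> (r *\<^sub>R x, r*u)\<in>H"
    and gd_le: "\<And>x u. (x,u)\<in>H \<Longrightarrow> u \<le> norm x"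
  using assms unfolding gd_def by blast+

lemma gd_fun:
  assumes g: "gd H" and a: "(x,u)\<in>H" "(x,v)\<in>H" shows "u = v"
proof -
  have "((-1) *\<^sub>R x, (-1) * v) \<in> H" "((-1) *\<^sub>R x, (-1) * u) \<in> H"
    using gd_sc[OF g] a by blast+
  hence n: "(- x, - v) \<in> H" "(- x, - u) \<in> H" by simp_all
  have "(x + - x, u + - v) \<in> H" "(x + - x, v + - u) \<in> H"
    using gd_add[OF g] a n by blast+
  hence "u + - v \<le> norm (x + - x)" "v + - u \<le> norm (x + - x)" using gd_le[OF g] by blast+
  thus ?thesis by simp
qed

lemma gd_extend:
  assumes g: "gd M" and nx: "\<forall>u. (x0,u) \<notin> M"
  shows "\<exists>M'. gd M' \<and> M \<subseteq> M' \<and> M' \<noteq> M"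
proof -
  define S where "S = {v - norm (y - x0) | y v. (y,v)\<in>M}"
  define c where "c = Sup S"
  have z: "(0,0) \<in> M" by (rule gd0[OF g])
  have ne: "S \<noteq> {}" using z S_def by blast
  have sb: "s \<le> norm (x + x0) - u" if "(x,u)\<in>M" "s \<in> S" for s x u
  proof -
    obtain y v where s: "s = v - norm (y - x0)" "(y,v)\<in>M" using \<open>s\<in>S\<close> S_def by blast
    have "(x+y, u+v)\<in>M" using gd_add[OF g] s(2) \<open>(x,u)\<in>M\<close> by blast
    hence "u + v \<le> norm (x+y)" by (rule gd_le[OF g])
    also have "norm (x+y) \<le> norm (x+x0) + norm (y - x0)"
      using norm_triangle_ineq[of "x+x0" "y-x0"] by (simp add: algebra_simps)
    finally show ?thesis using s by simp
  qed
  have upper: "c \<le> norm (x + x0) - u" if "(x,u)\<in>M" for x u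
    unfolding c_def using ne sb[OF that] by (intro cSup_least) auto
  have bdd: "bdd_above S" using sb[OF z] by (intro bdd_aboveI) blast
  have lower: "v - norm (y - x0) \<le> c" if "(y,v)\<in>M" for y v
    unfolding c_def by (rule cSup_upper[OF _ bdd]) (use that S_def in blast)
  define M' where "M' = {(x + r *\<^sub>R x0, u + r*c) | x u r. (x,u)\<in>M}"
  have dom: "u + r*c \<le> norm (x + r *\<^sub>R x0)" if xu: "(x,u)\<in>M" for x u r
  proof (cases "r > 0")
    case True
    have "((1/r) *\<^sub>R x, (1/r)*u) \<in> M" using gd_sc[OF g xu] by blast
    hence "c \<le> norm ((1/r) *\<^sub>R x + x0) - (1/r)*u" by (rule upper)
    hence "r*c \<le> r * (norm ((1/r) *\<^sub>R x + x0) - (1/r)*u)" using True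
      by (simp add: mult_left_mono)
    also have "\<dots> = r * norm ((1/r) *\<^sub>R x + x0) - u" using True
      by (simp add: right_diff_distrib)
    also have "r * norm ((1/r) *\<^sub>R x + x0) = norm (r *\<^sub>R ((1/r) *\<^sub>R x + x0))"
      using True by simp
    also have "r *\<^sub>R ((1/r) *\<^sub>R x + x0) = x + r *\<^sub>R x0" using True by (simp add: scaleR_add_right)
    finally show ?thesis by simp
  next
    case False
    show ?thesis
    proof (cases "r = 0")
      case True then show ?thesis using gd_le[OF g xu] by auto
    next
      case False
      define s where "s = - r"
      have s0: "s > 0" using False \<open>\<not> r > 0\<close> s_def by simp
      have "((1/s) *\<^sub>R x, (1/s)*u) \<in> M" using gd_sc[OF g xu] by blast
      hence "(1/s)*u - norm ((1/s) *\<^sub>R x - x0) \<le> c" by (rule lower)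
      hence "s * ((1/s)*u - norm ((1/s) *\<^sub>R x - x0)) \<le> s * c" using s0
        by (simp add: mult_left_mono)
      hence "u - s * norm ((1/s) *\<^sub>R x - x0) \<le> s * c" using s0 by (simp add: algebra_simps)
      also have "s * norm ((1/s) *\<^sub>R x - x0) = norm (s *\<^sub>R ((1/s) *\<^sub>R x - x0))"
        using s0 by simp
      also have "s *\<^sub>R ((1/s) *\<^sub>R x - x0) = x + r *\<^sub>R x0" using s0 s_def
        by (simp add: scaleR_diff_right)
      finally show ?thesis using s_def by simp
    qed
  qed
  have "gd M'"
    unfolding gd_def
  proof (intro conjI allI impI)
    show "(0,0) \<in> M'" unfolding M'_def using z by (rule_tac CollectI, rule_tac exI[of _ 0], force)
  next
    fix x u y v assume "(x,u)\<in>M'" "(y,v)\<in>M'"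
    then obtain x1 u1 r1 x2 u2 r2 where a: "(x1,u1)\<in>M" "(x2,u2)\<in>M"
      "x = x1 + r1 *\<^sub>R x0" "u = u1 + r1*c" "y = x2 + r2 *\<^sub>R x0" "v = u2 + r2*c"
      unfolding M'_def by blast
    have "(x1+x2, u1+u2)\<in>M" using a gd_add[OF g] gd_sc[OF g] by blast
    moreover have "x + y = (x1+x2) + (r1+r2) *\<^sub>R x0" "u + v = (u1+u2) + (r1+r2)*c"
      using a by (simp_all add: algebra_simps)
    ultimately show "(x+y,u+v)\<in>M'" unfolding M'_def by blast
  next
    fix k x u assume "(x,u)\<in>M'"
    then obtain x1 u1 r1 where a: "(x1,u1)\<in>M" "x = x1 + r1 *\<^sub>R x0" "u = u1 + r1*c"
      unfolding M'_def by blast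
    have "(k *\<^sub>R x1, k*u1)\<in>M" using a gd_add[OF g] gd_sc[OF g] by blast
    moreover have "k *\<^sub>R x = k *\<^sub>R x1 + (k*r1) *\<^sub>R x0" "k*u = k*u1 + (k*r1)*c"
      using a by (simp_all add: algebra_simps)
    ultimately show "(k *\<^sub>R x, k*u)\<in>M'" unfolding M'_def by blast
  next
    fix x u assume "(x,u)\<in>M'"
    then show "u \<le> norm x" unfolding M'_def using dom by blast
  qed
  moreover have "M \<subseteq> M'"
  proof
    fix p assume "p \<in> M"
    then obtain x u where "p = (x,u)" "(x,u)\<in>M" by (cases p) auto
    thus "p \<in> M'" unfolding M'_def by (rule_tac CollectI, rule_tac exI[of _ x], force)
  qed
  moreover have "(x0, c) \<in> M'" unfolding M'_def using z
    by (rule_tac CollectI, rule_tac exI[of _ 0], rule_tac exI[of _ 0], rule_tac exI[of _ 1], simp)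
  ultimately show ?thesis using nx by blast
qed

lemma hb_real:
  fixes w :: "'a::real_normed_vector"
  shows "\<exists>f. (\<forall>x y. f (x+y) = f x + f y) \<and> (\<forall>r x. f (r *\<^sub>R x) = r * f x)
     \<and> (\<forall>x. \<bar>f x\<bar> \<le> norm x) \<and> f w = norm w"
proof -
  define H0 where "H0 = {(r *\<^sub>R w, r * norm w) | r. True}"
  have gH0: "gd H0" unfolding gd_def
  proof (intro conjI allI impI)
    show "(0,0) \<in> H0" unfolding H0_def by (rule CollectI, rule exI[of _ 0]) simp
  next
    fix x u y v assume "(x,u)\<in>H0" "(y,v)\<in>H0"
    then obtain r s where "x = r *\<^sub>R w" "u = r * norm w" "y = s *\<^sub>R w" "v = s * norm w"
      unfolding H0_def by blast
    thus "(x+y,u+v)\<in>H0" unfolding H0_def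
      by (intro CollectI exI[of _ "r+s"]) (simp add: algebra_simps)
  next
    fix k x u assume "(x,u)\<in>H0"
    then obtain r where "x = r *\<^sub>R w" "u = r * norm w" unfolding H0_def by blast
    thus "(k *\<^sub>R x, k*u)\<in>H0" unfolding H0_def
      by (intro CollectI exI[of _ "k*r"]) (simp add: algebra_simps)
  next
    fix x u assume "(x,u)\<in>H0"
    then obtain r where "x = r *\<^sub>R w" "u = r * norm w" unfolding H0_def by blast
    thus "u \<le> norm x" by (simp add: mult_right_mono)
  qed
  define A where "A = {H. gd H \<and> H0 \<subseteq> H}"
  have "\<exists>M\<in>A. \<forall>X\<in>A. M \<subseteq> X \<longrightarrow> X = M"
  proof (rule subset_Zorn_nonempty)
    show "A \<noteq> {}" using gH0 A_def by blast
  next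
    fix C assume Cne: "C \<noteq> {}" and ch: "subset.chain A C"
    have CA: "C \<subseteq> A" and cmp: "\<And>X Y. X\<in>C \<Longrightarrow> Y\<in>C \<Longrightarrow> X \<subseteq> Y \<or> Y \<subseteq> X"
      using ch unfolding subset.chain_def by blast+
    have gX: "\<And>X. X\<in>C \<Longrightarrow> gd X" and hX: "\<And>X. X\<in>C \<Longrightarrow> H0 \<subseteq> X" using CA A_def by blast+
    obtain X0 where X0: "X0 \<in> C" using Cne by blast
    have "gd (\<Union>C)" unfolding gd_def
    proof (intro conjI allI impI)
      show "(0,0)\<in>\<Union>C" using X0 gd0[OF gX[OF X0]] by blast
    next
      fix x u y v assume "(x,u)\<in>\<Union>C" "(y,v)\<in>\<Union>C"
      then obtain X Y where XY: "X\<in>C" "Y\<in>C" "(x,u)\<in>X" "(y,v)\<in>Y" by blast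
      show "(x+y,u+v)\<in>\<Union>C"
      proof (cases "X \<subseteq> Y")
        case True thus ?thesis using XY gd_add[OF gX[OF XY(2)]] by blast
      next
        case False hence "Y \<subseteq> X" using cmp XY by blast
        thus ?thesis using XY gd_add[OF gX[OF XY(1)]] by blast
      qed
    next
      fix k x u assume "(x,u)\<in>\<Union>C"
      then obtain X where "X\<in>C" "(x,u)\<in>X" by blast
      thus "(k *\<^sub>R x, k*u)\<in>\<Union>C" using gd_sc[OF gX] by blast
    next
      fix x u assume "(x,u)\<in>\<Union>C"
      then obtain X where "X\<in>C" "(x,u)\<in>X" by blast
      thus "u \<le> norm x" using gd_le[OF gX] by blast
    qed
    moreover have "H0 \<subseteq> \<Union>C" using X0 hX by blast
    ultimately show "\<Union>C \<in> A" unfolding A_def by blast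
  qed
  then obtain M where MA: "M \<in> A" and mx: "\<And>X. X\<in>A \<Longrightarrow> M \<subseteq> X \<Longrightarrow> X = M" by blast
  have gM: "gd M" and H0M: "H0 \<subseteq> M" using MA A_def by blast+
  have tot: "\<exists>u. (x,u)\<in>M" for x
  proof (rule ccontr)
    assume "\<not> (\<exists>u. (x,u)\<in>M)"
    then obtain M' where "gd M'" "M \<subseteq> M'" "M' \<noteq> M" using gd_extend[OF gM] by blast
    moreover hence "M' \<in> A" using H0M A_def by blast
    ultimately show False using mx by blast
  qed
  define f where "f x = (THE u. (x,u)\<in>M)" for x
  have fM: "(x, f x)\<in>M" for x
  proof -
    obtain u where "(x,u)\<in>M" using tot by blast
    hence "(THE u. (x,u)\<in>M) = u" using gd_fun[OF gM] by blast
    thus ?thesis unfolding f_def using \<open>(x,u)\<in>M\<close> by simp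
  qed
  have fu: "f x = u" if "(x,u)\<in>M" for x u using gd_fun[OF gM fM that] .
  have add: "f (x+y) = f x + f y" for x y using fu[OF gd_add[OF gM fM fM]] .
  have sc: "f (r *\<^sub>R x) = r * f x" for r x using fu[OF gd_sc[OF gM fM]] .
  have le: "f x \<le> norm x" for x using gd_le[OF gM fM] .
  have abs: "\<bar>f x\<bar> \<le> norm x" for x
    using le[of x] le[of "(-1) *\<^sub>R x"] sc[of "-1" x] by simp
  have "(w, norm w)\<in>M" using H0M unfolding H0_def by (force intro: exI[of _ 1])
  hence "f w = norm w" by (rule fu)
  thus ?thesis using add sc abs by blast
qed



lemma cba_facts:
  assumes "complex_banach_algebra J"
  shows cba_add: "J (x + y) = J x + J y"
    and cba_sc: "J (r *\<^sub>R x) = r *\<^sub>R J x"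
    and cba_JJ: "J (J x) = - x"
    and cba_mult1: "J (x * y) = J x * y"
    and cba_mult2: "J (x * y) = x * J y"
    and cba_norm: "norm (cscale J c x) = cmod c * norm x"
  using assms unfolding complex_banach_algebra_def by blast+

lemma hb_complex:
  fixes J :: "'a::{real_normed_algebra,banach} \<Rightarrow> 'a"
  assumes cba: "complex_banach_algebra J"
  shows "\<exists>\<psi>. (\<forall>x y. \<psi> (x+y) = \<psi> x + \<psi> y) \<and> (\<forall>c x. \<psi> (cscale J c x) = c * \<psi> x)
     \<and> (\<forall>x. cmod (\<psi> x) \<le> norm x) \<and> \<psi> w = complex_of_real (norm w)"
proof -
  obtain f where fadd: "\<And>x y. f (x+y) = f x + f y" and fsc: "\<And>r x. f (r *\<^sub>R x) = r * f x"
    and fabs: "\<And>x. \<bar>f x\<bar> \<le> norm x" and fw: "f w = norm w"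
    using hb_real[of w] by blast
  define \<psi> where "\<psi> x = Complex (f x) (- f (J x))" for x
  have padd: "\<psi> (x+y) = \<psi> x + \<psi> y" for x y
    unfolding \<psi>_def by (simp add: cba_add[OF cba] fadd complex_eq_iff)
  have psc: "\<psi> (r *\<^sub>R x) = complex_of_real r * \<psi> x" for r x
    unfolding \<psi>_def by (simp add: cba_sc[OF cba] fsc complex_eq_iff)
  have pJ: "\<psi> (J x) = \<i> * \<psi> x" for x
    unfolding \<psi>_def by (simp add: cba_JJ[OF cba] complex_eq_iff fsc[of "-1", simplified])
  have pc: "\<psi> (cscale J c x) = c * \<psi> x" for c x
  proof -
    have "\<psi> (cscale J c x) = complex_of_real (Re c) * \<psi> x + complex_of_real (Im c) * (\<i> * \<psi> x)"
      unfolding cscale_def by (simp add: padd psc pJ)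
    also have "\<dots> = (complex_of_real (Re c) + \<i> * complex_of_real (Im c)) * \<psi> x"
      by (simp add: algebra_simps)
    also have "complex_of_real (Re c) + \<i> * complex_of_real (Im c) = c"
      by (simp add: complex_eq_iff)
    finally show ?thesis .
  qed
  have Rep: "Re (\<psi> x) = f x" for x unfolding \<psi>_def by simp
  have pn: "cmod (\<psi> x) \<le> norm x" for x
  proof (cases "\<psi> x = 0")
    case True thus ?thesis by simp
  next
    case False
    define c where "c = cnj (\<psi> x) / complex_of_real (cmod (\<psi> x))"
    have cm: "cmod c = 1" using False unfolding c_def by (simp add: norm_divide)
    have "c * \<psi> x = complex_of_real (cmod (\<psi> x))"
    proof -
      have sq: "\<psi> x * cnj (\<psi> x) = complex_of_real (cmod (\<psi> x)) * complex_of_real (cmod (\<psi> x))"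
        using complex_norm_square[of "\<psi> x"] by (simp add: power2_eq_square)
      have nz: "complex_of_real (cmod (\<psi> x)) \<noteq> 0" using False by simp
      show ?thesis unfolding c_def using sq nz by (simp add: field_simps mult.commute)
    qed
    hence "cmod (\<psi> x) = Re (\<psi> (cscale J c x))" by (simp add: pc)
    also have "\<dots> = f (cscale J c x)" by (rule Rep)
    also have "\<dots> \<le> norm (cscale J c x)" using fabs abs_le_D1 by blast
    also have "\<dots> = norm x" by (simp add: cba_norm[OF cba] cm)
    finally show ?thesis .
  qed
  have "Im (\<psi> w) = 0"
  proof -
    have "cmod (\<psi> w) \<le> Re (\<psi> w)" using pn[of w] Rep[of w] fw by simp
    hence "sqrt ((Re (\<psi> w))\<^sup>2 + (Im (\<psi> w))\<^sup>2) \<le> Re (\<psi> w)" by (simp add: cmod_def)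
    hence "(Re (\<psi> w))\<^sup>2 + (Im (\<psi> w))\<^sup>2 \<le> (Re (\<psi> w))\<^sup>2"
      by (metis real_sqrt_le_iff real_sqrt_abs abs_ge_self order_trans real_sqrt_ge_zero
          sqrt_le_D add_nonneg_nonneg zero_le_power2)
    thus ?thesis by simp
  qed
  hence "\<psi> w = complex_of_real (norm w)" using Rep[of w] fw by (simp add: complex_eq_iff)
  thus ?thesis using padd pc pn by blast
qed



lemma cscale_1[simp]: "cscale J 1 x = x" by (simp add: cscale_def)
lemma cscale_0[simp]: "cscale J 0 x = 0" by (simp add: cscale_def)
lemma cscale_real: "cscale J (complex_of_real r) x = r *\<^sub>R x" by (simp add: cscale_def)
lemma cscale_addc: "cscale J (l + m) x = cscale J l x + cscale J m x"
  by (simp add: cscale_def scaleR_left_distrib)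

context
  fixes J :: "'a::{real_normed_algebra,banach} \<Rightarrow> 'a"
  assumes cba: "complex_banach_algebra J"
begin

lemma J0: "J 0 = 0"
proof -
  have "J (0 + 0) = J 0 + J 0" by (rule cba_add[OF cba])
  thus ?thesis by simp
qed

lemma cscale_addx: "cscale J c (x + y) = cscale J c x + cscale J c y"
  by (simp add: cscale_def cba_add[OF cba] scaleR_add_right)

lemma cscale_scaleR: "cscale J c (r *\<^sub>R x) = r *\<^sub>R cscale J c x"
  by (simp add: cscale_def cba_sc[OF cba] scaleR_add_right mult.commute)

lemma cscale_multL: "cscale J c x * w = cscale J c (x * w)"
  by (simp add: cscale_def cba_mult1[OF cba] distrib_right)

lemma cscale_mult: "cscale J (c * l) x = cscale J c (cscale J l x)"
  by (simp add: cscale_def cba_add[OF cba] cba_sc[OF cba] cba_JJ[OF cba] algebra_simps)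

lemma cscale_x0[simp]: "cscale J c 0 = 0"
  by (simp add: cscale_def J0)

end

fun pw :: "'a::real_normed_algebra \<Rightarrow> nat \<Rightarrow> 'a" where
  "pw x 0 = x" | "pw x (Suc k) = x * pw x k"

lemma pw_norm: "norm (pw x k) \<le> norm x ^ Suc k"
proof (induction k)
  case 0 then show ?case by simp
next
  case (Suc k)
  have "norm (pw x (Suc k)) \<le> norm x * norm (pw x k)" by (simp add: norm_mult_ineq)
  also have "\<dots> \<le> norm x * norm x ^ Suc k" by (rule mult_left_mono[OF Suc]) simp
  finally show ?case by simp
qed

lemma neumann:
  fixes x :: "'a::{real_normed_algebra,banach}"
  assumes "norm x \<le> 1/2"
  shows "\<exists>y. y + x * y = x \<and> norm y \<le> 2 * norm x"
proof -
  define f where "f k = (-1::real)^k *\<^sub>R pw x k" for k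
  have nf: "norm (f k) \<le> norm x ^ Suc k" for k unfolding f_def using pw_norm[of x k] by simp
  have "summable (\<lambda>k. norm x * norm x ^ k)"
    by (rule summable_mult, rule summable_geometric) (use assms in simp)
  hence "summable (\<lambda>k. norm x ^ Suc k)" by simp
  hence sf: "summable f"
    by (rule summable_comparison_test[rotated]) (use nf in blast)
  define y where "y = suminf f"
  have "x * y = suminf (\<lambda>k. x * f k)" unfolding y_def by (rule suminf_mult[OF sf, symmetric])
  also have "(\<lambda>k. x * f k) = (\<lambda>k. - f (Suc k))" unfolding f_def by (simp add: mult_scaleR_right)
  also have "suminf (\<lambda>k. - f (Suc k)) = - suminf (\<lambda>k. f (Suc k))"
    by (rule suminf_minus) (use sf summable_Suc_iff in blast)
  also have "suminf (\<lambda>k. f (Suc k)) = y - x" unfolding y_def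
    using suminf_split_head[OF sf] by (simp add: f_def)
  finally have eq: "y + x * y = x" by simp
  have "norm y \<le> norm x + norm (x * y)" proof -
    have "y = x - x * y" using eq by (simp add: algebra_simps)
    thus ?thesis using norm_triangle_ineq4[of x "x*y"] by simp
  qed
  also have "norm (x*y) \<le> norm x * norm y" by (rule norm_mult_ineq)
  also have "norm x * norm y \<le> 1/2 * norm y" by (rule mult_right_mono[OF assms]) simp
  finally have "norm y \<le> 2 * norm x" by simp
  thus ?thesis using eq by blast
qed



lemma unit_id_prop: "unital TYPE('a::real_normed_algebra) \<Longrightarrow> is_unit_id (unit_id::'a)"
  unfolding unital_def unit_id_def by (rule someI_ex)

context
  fixes J :: "'a::{real_normed_algebra,banach} \<Rightarrow> 'a"
  assumes cba: "complex_banach_algebra J"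
begin

lemma A1_bdd: "bdd_above {norm (a * c + cscale J l c) | c. norm c \<le> 1}"
proof (rule bdd_aboveI)
  fix z assume "z \<in> {norm (a * c + cscale J l c) | c. norm c \<le> 1}"
  then obtain c where z: "z = norm (a * c + cscale J l c)" "norm c \<le> 1" by blast
  have "z \<le> norm (a*c) + norm (cscale J l c)" using z norm_triangle_ineq by simp
  also have "\<dots> \<le> norm a * norm c + cmod l * norm c"
    by (simp add: cba_norm[OF cba] norm_mult_ineq)
  also have "\<dots> \<le> norm a * 1 + cmod l * 1"
    using z(2) by (intro add_mono mult_left_mono) auto
  finally show "z \<le> norm a + cmod l" by simp
qed

lemma A1_ge: "\<not> unital TYPE('a) \<Longrightarrow> norm c \<le> 1 \<Longrightarrow> norm (a * c + cscale J l c) \<le> A1norm J a l"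
  unfolding A1norm_def by (simp, rule cSup_upper[OF _ A1_bdd]) blast

lemma A1_le: "\<not> unital TYPE('a) \<Longrightarrow> (\<And>c. norm c \<le> 1 \<Longrightarrow> norm (a * c + cscale J l c) \<le> B)
   \<Longrightarrow> A1norm J a l \<le> B"
proof -
  assume nu: "\<not> unital TYPE('a)" and b: "\<And>c. norm c \<le> 1 \<Longrightarrow> norm (a * c + cscale J l c) \<le> B"
  have "norm (a*0 + cscale J l 0) \<in> {norm (a * c + cscale J l c) | c. norm c \<le> 1}"
    by (intro CollectI exI[of _ 0]) simp
  hence ne: "{norm (a * c + cscale J l c) | c. norm c \<le> 1} \<noteq> {}" by blast
  have "A1norm J a l = Sup {norm (a * c + cscale J l c) | c. norm c \<le> 1}"
    unfolding A1norm_def using nu by simp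
  also have "\<dots> \<le> B" by (rule cSup_least[OF ne]) (use b in blast)
  finally show ?thesis .
qed

lemma A1_nonneg: "\<not> unital TYPE('a) \<Longrightarrow> 0 \<le> A1norm J a l"
  using A1_ge[of 0 a l] by (simp add: cscale_x0[OF cba])

lemma key:
  assumes ar: "a \<in> frakr J" and t: "0 \<le> t"
  shows "norm w \<le> norm (w + t *\<^sub>R (a * w))"
proof (cases "w = 0")
  case True thus ?thesis by simp
next
  case False
  obtain \<psi> where padd: "\<And>x y. \<psi> (x+y) = \<psi> x + \<psi> y" and pc: "\<And>c x. \<psi> (cscale J c x) = c * \<psi> x"
    and pn: "\<And>x. cmod (\<psi> x) \<le> norm x" and pw: "\<psi> w = complex_of_real (norm w)"
    using hb_complex[OF cba, of w] by blast
  have psc: "\<psi> (r *\<^sub>R x) = complex_of_real r * \<psi> x" for r x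
    using pc[of "complex_of_real r" x] by (simp add: cscale_real)
  have nw: "norm w > 0" using False by simp
  have "0 \<le> Re (\<psi> (a * w))"
  proof (cases "unital TYPE('a)")
    case True
    have e: "is_unit_id (unit_id::'a)" by (rule unit_id_prop[OF True])
    have ew: "unit_id * w = w" and ne: "norm (unit_id::'a) = 1" using e is_unit_id_def by auto
    define \<phi> where "\<phi> b = \<psi> (b * w) / complex_of_real (norm w)" for b
    have pb: "cmod (\<phi> x) \<le> norm x" for x
    proof -
      have "cmod (\<phi> x) = cmod (\<psi> (x * w)) / norm w" unfolding \<phi>_def by (simp add: norm_divide)
      also have "\<dots> \<le> norm (x * w) / norm w" using pn nw by (simp add: divide_right_mono)
      also have "\<dots> \<le> norm x" using nw norm_mult_ineq[of x w] by (simp add: pos_divide_le_eq)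
      finally show ?thesis .
    qed
    have p1: "\<phi> unit_id = 1" unfolding \<phi>_def using ew pw nw by simp
    have "\<phi> \<in> states_unital J" unfolding states_unital_def
    proof (intro CollectI conjI allI)
      show "\<phi> (x + y) = \<phi> x + \<phi> y" for x y unfolding \<phi>_def by (simp add: distrib_right padd add_divide_distrib)
      show "\<phi> (cscale J c x) = c * \<phi> x" for c x unfolding \<phi>_def by (simp add: cscale_multL[OF cba] pc)
      show "\<exists>K. \<forall>x. cmod (\<phi> x) \<le> K * norm x" using pb by (intro exI[of _ 1]) simp
      show "Sup {cmod (\<phi> x) | x. norm x \<le> 1} = 1"
      proof (rule cSup_eq_maximum)
        show "1 \<in> {cmod (\<phi> x) | x. norm x \<le> 1}" using p1 ne by (intro CollectI exI[of _ unit_id]) simp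
        show "z \<le> 1" if "z \<in> {cmod (\<phi> x) | x. norm x \<le> 1}" for z
          using that pb order_trans by blast
      qed
      show "\<phi> unit_id = 1" by (rule p1)
    qed
    hence "0 \<le> Re (\<phi> a)" using ar True unfolding frakr_def by simp
    thus ?thesis unfolding \<phi>_def using nw by (simp add: Re_divide_of_real zero_le_divide_iff)
  next
    case False
    define \<Psi> where "\<Psi> b l = \<psi> (b * w + cscale J l w) / complex_of_real (norm w)" for b l
    have pb: "cmod (\<Psi> b l) \<le> A1norm J b l" for b l
    proof -
      define c where "c = (1 / norm w) *\<^sub>R w"
      have nc: "norm c \<le> 1" unfolding c_def using nw by simp
      have "cmod (\<Psi> b l) = cmod (\<psi> (b * w + cscale J l w)) / norm w" unfolding \<Psi>_def by (simp add: norm_divide)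
      also have "\<dots> \<le> norm (b * w + cscale J l w) / norm w" using pn nw by (simp add: divide_right_mono)
      also have "\<dots> = norm (b * c + cscale J l c)"
        unfolding c_def using nw
        by (simp add: cscale_scaleR[OF cba] mult_scaleR_right scaleR_add_right[symmetric] divide_inverse)
      also have "\<dots> \<le> A1norm J b l" by (rule A1_ge[OF False nc])
      finally show ?thesis .
    qed
    have A01: "A1norm J 0 1 \<le> 1" by (rule A1_le[OF False]) simp
    have p1: "\<Psi> 0 1 = 1" unfolding \<Psi>_def using pw nw by simp
    have "\<Psi> \<in> states_nonunital J" unfolding states_nonunital_def
    proof (intro CollectI conjI allI)
      show "\<Psi> (x + y) (l + m) = \<Psi> x l + \<Psi> y m" for x y l m unfolding \<Psi>_def
        by (simp add: distrib_right padd add_divide_distrib cscale_addc algebra_simps)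
      show "\<Psi> (cscale J c x) (c * l) = c * \<Psi> x l" for c x l unfolding \<Psi>_def
        by (simp add: cscale_multL[OF cba] cscale_mult[OF cba] cscale_addx[OF cba, symmetric] pc)
      show "\<exists>K. \<forall>x l. cmod (\<Psi> x l) \<le> K * A1norm J x l" using pb by (intro exI[of _ 1]) simp
      show "Sup {cmod (\<Psi> x l) | x l. A1norm J x l \<le> 1} = 1"
      proof (rule cSup_eq_maximum)
        show "1 \<in> {cmod (\<Psi> x l) | x l. A1norm J x l \<le> 1}" using p1 A01
          by (intro CollectI exI[of _ 0] exI[of _ 1]) simp
        show "z \<le> 1" if "z \<in> {cmod (\<Psi> x l) | x l. A1norm J x l \<le> 1}" for z
          using that pb order_trans by blast
      qed
      show "\<Psi> 0 1 = 1" by (rule p1)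
    qed
    hence "0 \<le> Re (\<Psi> a 0)" using ar False unfolding frakr_def by simp
    thus ?thesis unfolding \<Psi>_def using nw by (simp add: Re_divide_of_real zero_le_divide_iff)
  qed
  have "norm w = Re (\<psi> w)" using pw by simp
  also have "\<dots> \<le> Re (\<psi> w) + t * Re (\<psi> (a * w))" using t \<open>0 \<le> Re (\<psi> (a * w))\<close> by simp
  also have "\<dots> = Re (\<psi> (w + t *\<^sub>R (a * w)))" by (simp add: padd psc)
  also have "\<dots> \<le> cmod (\<psi> (w + t *\<^sub>R (a * w)))" by (rule complex_Re_le_cmod)
  also have "\<dots> \<le> norm (w + t *\<^sub>R (a * w))" by (rule pn)
  finally show ?thesis .
qed

end


definition stf :: "('a::{real_normed_algebra,banach} \<Rightarrow> 'a) \<Rightarrow> ('a \<Rightarrow> complex) set" where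
  "stf J = (if unital TYPE('a) then states_unital J else (\<lambda>\<psi> a. \<psi> a 0) ` states_nonunital J)"

lemma frakr_alt: "frakr J = {a. \<forall>\<phi>\<in>stf J. 0 \<le> Re (\<phi> a)}"
  unfolding frakr_def stf_def by auto

context
  fixes J :: "'a::{real_normed_algebra,banach} \<Rightarrow> 'a"
  assumes cba: "complex_banach_algebra J"
begin

lemma states_bound_u:
  assumes "\<phi> \<in> states_unital J"
  shows "cmod (\<phi> x) \<le> norm x"
proof -
  have add: "\<And>x y. \<phi> (x + y) = \<phi> x + \<phi> y" and hom: "\<And>c x. \<phi> (cscale J c x) = c * \<phi> x"
    and K: "\<exists>K. \<forall>x. cmod (\<phi> x) \<le> K * norm x" and S: "Sup {cmod (\<phi> x) | x. norm x \<le> 1} = 1"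
    using assms unfolding states_unital_def by blast+
  obtain K where K: "\<And>x. cmod (\<phi> x) \<le> K * norm x" using K by blast
  have rh: "\<phi> (r *\<^sub>R x) = complex_of_real r * \<phi> x" for r x using hom[of "complex_of_real r" x]
    by (simp add: cscale_real)
  show ?thesis
  proof (cases "x = 0")
    case True
    have "\<phi> 0 = 0" using rh[of 0 0] by simp
    thus ?thesis using True by simp
  next
    case False
    define y where "y = (1 / norm x) *\<^sub>R x"
    have ny: "norm y = 1" unfolding y_def using False by simp
    have bdd: "bdd_above {cmod (\<phi> x) | x. norm x \<le> 1}"
    proof (rule bdd_aboveI)
      fix z assume "z \<in> {cmod (\<phi> x) | x. norm x \<le> 1}"
      then obtain u where u: "z = cmod (\<phi> u)" "norm u \<le> 1" by blast
      have "z \<le> K * norm u" using K u by simp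
      also have "\<dots> \<le> \<bar>K\<bar> * norm u" by (simp add: mult_right_mono)
      also have "\<dots> \<le> \<bar>K\<bar> * 1" using u by (intro mult_left_mono) auto
      finally show "z \<le> \<bar>K\<bar>" by simp
    qed
    have "cmod (\<phi> y) \<le> Sup {cmod (\<phi> x) | x. norm x \<le> 1}"
      by (rule cSup_upper[OF _ bdd]) (use ny in force)
    hence "cmod (\<phi> y) \<le> 1" using S by simp
    moreover have "x = norm x *\<^sub>R y" unfolding y_def using False by simp
    hence "\<phi> x = complex_of_real (norm x) * \<phi> y" using rh by metis
    ultimately show ?thesis by (simp add: norm_mult mult_left_le)
  qed
qed

lemma states_bound_n:
  assumes nu: "\<not> unital TYPE('a)" and "\<psi> \<in> states_nonunital J"
  shows "cmod (\<psi> a l) \<le> A1norm J a l"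
proof -
  have hom: "\<And>c a l. \<psi> (cscale J c a) (c * l) = c * \<psi> a l"
    and K: "\<exists>K. \<forall>a l. cmod (\<psi> a l) \<le> K * A1norm J a l"
    and S: "Sup {cmod (\<psi> a l) | a l. A1norm J a l \<le> 1} = 1"
    using assms(2) unfolding states_nonunital_def by blast+
  obtain K where K: "\<And>a l. cmod (\<psi> a l) \<le> K * A1norm J a l" using K by blast
  have rh: "\<psi> (r *\<^sub>R a) (complex_of_real r * l) = complex_of_real r * \<psi> a l" for r a l
    using hom[of "complex_of_real r" a l] by (simp add: cscale_real)
  define s where "s = A1norm J a l"
  have s0: "0 \<le> s" unfolding s_def by (rule A1_nonneg[OF cba nu])
  show ?thesis
  proof (cases "s = 0")
    case True thus ?thesis using K[of a l] s_def by simp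
  next
    case False
    hence sp: "s > 0" using s0 by simp
    define r where "r = 1 / s"
    have rp: "r > 0" using sp r_def by simp
    have A: "A1norm J (r *\<^sub>R a) (complex_of_real r * l) \<le> 1"
    proof (rule A1_le[OF cba nu])
      fix c :: 'a assume c: "norm c \<le> 1"
      have "r *\<^sub>R a * c + cscale J (complex_of_real r * l) c = r *\<^sub>R (a * c + cscale J l c)"
        by (simp add: cscale_mult[OF cba] cscale_real scaleR_add_right)
      hence "norm (r *\<^sub>R a * c + cscale J (complex_of_real r * l) c) = r * norm (a * c + cscale J l c)"
        using rp by simp
      also have "\<dots> \<le> r * s" unfolding s_def using rp A1_ge[OF cba nu c] by (simp add: mult_left_mono)
      also have "\<dots> = 1" using sp r_def by simp
      finally show "norm (r *\<^sub>R a * c + cscale J (complex_of_real r * l) c) \<le> 1" .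
    qed
    have bdd: "bdd_above {cmod (\<psi> a l) | a l. A1norm J a l \<le> 1}"
    proof (rule bdd_aboveI)
      fix z assume "z \<in> {cmod (\<psi> a l) | a l. A1norm J a l \<le> 1}"
      then obtain u m where u: "z = cmod (\<psi> u m)" "A1norm J u m \<le> 1" by blast
      have "z \<le> K * A1norm J u m" using K u by simp
      also have "\<dots> \<le> \<bar>K\<bar> * A1norm J u m" using A1_nonneg[OF cba nu] by (simp add: mult_right_mono)
      also have "\<dots> \<le> \<bar>K\<bar> * 1" using u by (intro mult_left_mono) auto
      finally show "z \<le> \<bar>K\<bar>" by simp
    qed
    have "cmod (\<psi> (r *\<^sub>R a) (complex_of_real r * l)) \<le> Sup {cmod (\<psi> a l) | a l. A1norm J a l \<le> 1}"
      by (rule cSup_upper[OF _ bdd]) (use A in blast)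
    hence "cmod (\<psi> (r *\<^sub>R a) (complex_of_real r * l)) \<le> 1" using S by simp
    hence "r * cmod (\<psi> a l) \<le> 1" using rh rp by (simp add: norm_mult)
    hence "cmod (\<psi> a l) \<le> 1 / r" using rp by (simp add: field_simps)
    thus ?thesis using r_def s_def sp by simp
  qed
qed

lemma stf_props:
  assumes "\<phi> \<in> stf J"
  shows "\<phi> (x + y) = \<phi> x + \<phi> y" and "\<phi> (r *\<^sub>R x) = complex_of_real r * \<phi> x"
    and "cmod (\<phi> x) \<le> norm x" and "x \<in> frakF J \<Longrightarrow> 0 \<le> Re (\<phi> x)"
proof -
  have "(\<phi> (x + y) = \<phi> x + \<phi> y) \<and> (\<phi> (r *\<^sub>R x) = complex_of_real r * \<phi> x)
    \<and> (cmod (\<phi> x) \<le> norm x) \<and> (x \<in> frakF J \<longrightarrow> 0 \<le> Re (\<phi> x))"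
  proof (cases "unital TYPE('a)")
    case True
    hence st: "\<phi> \<in> states_unital J" using assms unfolding stf_def by simp
    have add: "\<And>x y. \<phi> (x + y) = \<phi> x + \<phi> y" and hom: "\<And>c x. \<phi> (cscale J c x) = c * \<phi> x"
      and p1: "\<phi> unit_id = 1"
      using st unfolding states_unital_def by blast+
    have rh: "\<phi> (r *\<^sub>R x) = complex_of_real r * \<phi> x" for r x using hom[of "complex_of_real r" x]
      by (simp add: cscale_real)
    have F: "0 \<le> Re (\<phi> x)" if xF: "x \<in> frakF J"
    proof -
      have "norm (unit_id - x) \<le> 1" using xF True unfolding frakF_def A1norm_def by simp
      moreover have "\<phi> (unit_id - x) = 1 - \<phi> x"
        using add[of unit_id "(-1) *\<^sub>R x"] rh[of "-1" x] p1 by simp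
      ultimately have "cmod (1 - \<phi> x) \<le> 1" using states_bound_u[OF st, of "unit_id - x"] by simp
      hence "Re (1 - \<phi> x) \<le> 1" using complex_Re_le_cmod order_trans by blast
      thus ?thesis by simp
    qed
    show ?thesis using add rh F states_bound_u[OF st] by blast
  next
    case False
    then obtain \<psi> where st: "\<psi> \<in> states_nonunital J" and pd: "\<phi> = (\<lambda>a. \<psi> a 0)"
      using assms unfolding stf_def by auto
    have add: "\<And>a b l m. \<psi> (a + b) (l + m) = \<psi> a l + \<psi> b m"
      and hom: "\<And>c a l. \<psi> (cscale J c a) (c * l) = c * \<psi> a l" and p1: "\<psi> 0 1 = 1"
      using st unfolding states_nonunital_def by blast+
    have rh: "\<psi> (r *\<^sub>R x) 0 = complex_of_real r * \<psi> x 0" for r x using hom[of "complex_of_real r" x 0]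
      by (simp add: cscale_real)
    have bd: "cmod (\<psi> x 0) \<le> norm x"
    proof -
      have "cmod (\<psi> x 0) \<le> A1norm J x 0" by (rule states_bound_n[OF False st])
      also have "\<dots> \<le> norm x"
      proof (rule A1_le[OF cba False])
        fix c :: 'a assume "norm c \<le> 1"
        thus "norm (x * c + cscale J 0 c) \<le> norm x"
          using norm_mult_ineq[of x c] by (simp add: mult_left_le order_trans)
      qed
      finally show ?thesis .
    qed
    have F: "0 \<le> Re (\<psi> x 0)" if xF: "x \<in> frakF J"
    proof -
      have "A1norm J (-x) 1 \<le> 1" using xF unfolding frakF_def by simp
      moreover have "\<psi> (-x) 1 = 1 - \<psi> x 0"
        using add[of "-x" 0 0 1] rh[of "-1" x] p1 by simp
      ultimately have "cmod (1 - \<psi> x 0) \<le> 1" using states_bound_n[OF False st, of "-x" 1] by simp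
      hence "Re (1 - \<psi> x 0) \<le> 1" using complex_Re_le_cmod order_trans by blast
      thus ?thesis by simp
    qed
    show ?thesis unfolding pd using add[of x y 0 0] rh bd F by simp
  qed
  thus "\<phi> (x + y) = \<phi> x + \<phi> y" and "\<phi> (r *\<^sub>R x) = complex_of_real r * \<phi> x"
    and "cmod (\<phi> x) \<le> norm x" and "x \<in> frakF J \<Longrightarrow> 0 \<le> Re (\<phi> x)" by blast+
qed

end


theorem proposition3p5:
  fixes J :: "'a::{real_normed_algebra,banach} \<Rightarrow> 'a"
  assumes "complex_banach_algebra J"
    and "approx_unital TYPE('a)"
  shows "closure {t *\<^sub>R a | t a. t \<ge> 0 \<and> a \<in> frakF J} = frakr J"
proof
  note cba = assms(1)
  let ?C = "{t *\<^sub>R a | t a. t \<ge> 0 \<and> a \<in> frakF J}"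
  show "closure ?C \<subseteq> frakr J"
  proof (rule closure_minimal)
    show "?C \<subseteq> frakr J" unfolding frakr_alt
    proof
      fix z assume "z \<in> ?C"
      then obtain t a where z: "z = t *\<^sub>R a" "t \<ge> 0" "a \<in> frakF J" by blast
      show "z \<in> {a. \<forall>\<phi>\<in>stf J. 0 \<le> Re (\<phi> a)}"
      proof (intro CollectI ballI)
        fix \<phi> assume p: "\<phi> \<in> stf J"
        have "\<phi> z = complex_of_real t * \<phi> a" using z stf_props(2)[OF cba p] by simp
        thus "0 \<le> Re (\<phi> z)" using stf_props(4)[OF cba p z(3)] z(2) by simp
      qed
    qed
    have "{a. \<forall>\<phi>\<in>stf J. 0 \<le> Re (\<phi> a)} = (\<Inter>\<phi>\<in>stf J. {a. 0 \<le> Re (\<phi> a)})" by blast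
    also have "closed \<dots>"
    proof (rule closed_INT, intro ballI)
      fix \<phi> assume p: "\<phi> \<in> stf J"
      have "bounded_linear (\<lambda>a. Re (\<phi> a))"
      proof (rule bounded_linear_intro[where K=1])
        show "Re (\<phi> (x + y)) = Re (\<phi> x) + Re (\<phi> y)" for x y using stf_props(1)[OF cba p] by simp
        show "Re (\<phi> (r *\<^sub>R x)) = r *\<^sub>R Re (\<phi> x)" for r x using stf_props(2)[OF cba p] by simp
        show "norm (Re (\<phi> x)) \<le> norm x * 1" for x
          using stf_props(3)[OF cba p, of x] abs_Re_le_cmod[of "\<phi> x"] by simp
      qed
      hence "continuous_on UNIV (\<lambda>a. Re (\<phi> a))" by (rule linear_continuous_on)
      thus "closed {a. 0 \<le> Re (\<phi> a)}" by (intro closed_Collect_le continuous_on_const)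
    qed
    finally show "closed (frakr J)" unfolding frakr_alt .
  qed
next
  note cba = assms(1)
  let ?C = "{t *\<^sub>R a | t a. t \<ge> 0 \<and> a \<in> frakF J}"
  show "frakr J \<subseteq> closure ?C"
  proof
    fix a assume ar: "a \<in> frakr J"
    show "a \<in> closure ?C" unfolding closure_approachable
    proof (intro allI impI)
      fix e :: real assume e: "e > 0"
      define n where "n = norm a"
      define t where "t = min (1 / (2*n+1)) (e / (2*n^2+1))"
      have n0: "n \<ge> 0" unfolding n_def by simp
      have tp: "t > 0"
      proof -
        have "2*n^2+1 > 0" using zero_le_power2[of n] by linarith
        hence "e / (2*n^2+1) > 0" using e by simp
        moreover have "1 / (2*n+1) > 0" using n0 by simp
        ultimately show ?thesis unfolding t_def by simp
      qed
      have t1: "t * n \<le> 1/2"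
      proof -
        have "t \<le> 1 / (2*n+1)" unfolding t_def by simp
        hence "t * n \<le> 1 / (2*n+1) * n" using n0 by (rule mult_right_mono)
        also have "\<dots> = n / (2*n+1)" by simp
        also have "\<dots> \<le> 1/2" using n0 by (simp add: field_simps)
        finally show ?thesis .
      qed
      have t2: "2 * t * n^2 < e"
      proof -
        have "t \<le> e / (2*n^2+1)" unfolding t_def by simp
        moreover have pos: "2*n^2+1 > 0" using zero_le_power2[of n] by linarith
        ultimately have "t * (2*n^2+1) \<le> e" by (simp add: pos_le_divide_eq)
        moreover have "t * (2*n^2+1) = 2*t*n^2 + t" by (simp add: algebra_simps)
        ultimately show ?thesis using tp by linarith
      qed
      define x where "x = t *\<^sub>R a"
      have nx: "norm x = t * n" unfolding x_def n_def using tp by simp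
      obtain y where yeq: "y + x * y = x" and ny: "norm y \<le> 2 * norm x"
        using neumann[of x] nx t1 by auto
      have inv: "c = (c - y * c) + t *\<^sub>R (a * (c - y * c))" for c
      proof -
        have "t *\<^sub>R (a * (c - y * c)) = x * c - x * (y * c)" unfolding x_def
          by (simp add: algebra_simps)
        also have "x * (y * c) = (x - y) * c"
        proof -
          have xy: "x * y = x - y" using yeq by (metis add_diff_cancel_left')
          show ?thesis by (simp only: mult.assoc[symmetric] xy)
        qed
        finally show ?thesis by (simp add: algebra_simps)
      qed
      have wle: "norm (c - y * c) \<le> norm c" for c
      proof -
        have "norm (c - y * c) \<le> norm ((c - y * c) + t *\<^sub>R (a * (c - y * c)))"
          using key[OF cba ar, of t "c - y * c"] tp by simp
        thus ?thesis using inv[of c] by metis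
      qed
      have yF: "y \<in> frakF J"
      proof (cases "unital TYPE('a)")
        case True
        have e1: "is_unit_id (unit_id::'a)" by (rule unit_id_prop[OF True])
        have "A1norm J (-y) 1 = norm (unit_id - y * unit_id)"
          unfolding A1norm_def using True e1 unfolding is_unit_id_def by simp
        also have "\<dots> \<le> norm (unit_id::'a)" by (rule wle)
        also have "\<dots> = 1" using e1 unfolding is_unit_id_def by simp
        finally show ?thesis unfolding frakF_def by simp
      next
        case False
        have "A1norm J (-y) 1 \<le> 1"
        proof (rule A1_le[OF cba False])
          fix c :: 'a assume "norm c \<le> 1"
          thus "norm (- y * c + cscale J 1 c) \<le> 1" using wle[of c] by simp
        qed
        thus ?thesis unfolding frakF_def by simp
      qed
      have inC: "(1/t) *\<^sub>R y \<in> ?C" using yF tp by (intro CollectI exI[of _ "1/t"] exI[of _ y]) simp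
      have "(1/t) *\<^sub>R y - a = - (a * y)"
      proof -
        have "y - x = - (x * y)" using yeq by (simp add: algebra_simps)
        hence "(1/t) *\<^sub>R (y - x) = - (1/t) *\<^sub>R (x * y)" by simp
        thus ?thesis unfolding x_def using tp by (simp add: scaleR_diff_right)
      qed
      hence "dist ((1/t) *\<^sub>R y) a = norm (a * y)" by (simp add: dist_norm)
      also have "\<dots> \<le> n * norm y" unfolding n_def by (rule norm_mult_ineq)
      also have "\<dots> \<le> n * (2 * (t * n))" using ny nx n0 by (simp add: mult_left_mono)
      also have "\<dots> = 2 * t * n^2" by (simp add: power2_eq_square)
      also have "\<dots> < e" by (rule t2)
      finally show "\<exists>y\<in>?C. dist y a < e" using inC by blast
    qed
  qed
qed


end
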